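(* Let $\{X(t)\}$ be generated by the voting diffusion model with a communicating pair process $\{\{i_1(t),i_2(t)\}\}$ and a subject process $\{S(t)\}$. Fix a candidate $j\in[n]$ and define the random graph $G^{(j)}=([m],E^{(j)})$ by $$E^{(j)}=\Big\{\{a,b\}: a\ne b\in[m],\ \sum_{t=0}^{\infty}\mathbf{1}_{\{\{i_1(t),i_2(t)\}=\{a,b\}\}}\,\mathbf{1}_{\{j\in S(t)\}}=\infty\Big\},$$ i.e. $\{a,b\}$ is an edge iff $a$ and $b$ are the communicating pair and candidate $j$ is in the subject set at infinitely many times. Then for any agents $a,b\in[m]$, the event that $a$ and $b$ lie in the same connected component of $G^{(j)}$ is contained in the event $\{\lim_{t\to\infty}(X_{aj}(t)-X_{bj}(t))=0\}$.
   Context: Voting diffusion model: there are $m$ agents indexed by $[m]=\{1,\dots,m\}$ and $n$ candidates indexed by $[n]$. The opinion profile at time $t\in\{0,1,2,\dots\}$ is a random real $m\times n$ matrix $X(t)$, where $X_{ij}(t)$ is agent $i$'s score of candidate $j$. A communicating pair process is a sequence of random unordered pairs $\{i_1(t),i_2(t)\}$ with $i_1(t)\ne i_2(t)\in[m]$; a subject process is a sequence of random subsets $S(t)\subseteq[n]$; both are arbitrary (measurable) processes. The update is: $X_{ij}(t+1)=\tfrac12\big(X_{i_1(t)j}(t)+X_{i_2(t)j}(t)\big)$ if $i\in\{i_1(t),i_2(t)\}$ and $j\in S(t)$, and $X_{ij}(t+1)=X_{ij}(t)$ otherwise. *)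

theory Defs
  imports "HOL-Probability.Probability"
begin

text \<open>Edge set of the random graph G^(j) along one sample path: agents are [m] = {1..m};
  i1 t, i2 t is the communicating pair and S t the subject set at time t.
  The sum of indicators over t is infinite iff infinitely many times qualify.\<close>
definition voting_edges ::
  "nat \<Rightarrow> (nat \<Rightarrow> nat) \<Rightarrow> (nat \<Rightarrow> nat) \<Rightarrow> (nat \<Rightarrow> nat set) \<Rightarrow> nat \<Rightarrow> nat set set" where
  "voting_edges m i1 i2 S j =
     {{a, b} | a b. a \<in> {1..m} \<and> b \<in> {1..m} \<and> a \<noteq> b \<and>
        infinite {t. {i1 t, i2 t} = {a, b} \<and> j \<in> S t}}"

definition same_component :: "nat set set \<Rightarrow> nat \<Rightarrow> nat \<Rightarrow> bool" where
  "same_component E a b \<longleftrightarrow> (a, b) \<in> {(x, y). {x, y} \<in> E}\<^sup>*"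

end

theory Submission
  imports Defs
begin

lemma gap_lemma:
  fixes y :: "nat \<Rightarrow> real"
  assumes fin: "finite C" and aC: "a \<in> C" and bC: "b \<in> C" and ep: "\<epsilon> > 0"
    and dif: "y a - y b \<ge> \<epsilon>"
  shows "\<exists>U L \<theta>. U \<union> L = C \<and> U \<inter> L = {} \<and> a \<in> U \<and> b \<in> L \<and>
           (\<forall>i\<in>L. y i < \<theta>) \<and> (\<forall>i\<in>U. \<theta> + \<epsilon> / card C \<le> y i)"
proof -
  define l where "l = card C"
  have l1: "l \<ge> 1" using fin aC unfolding l_def by (metis card_0_eq empty_iff less_one not_le)
  define h where "h = \<epsilon> / l"
  have hpos: "h > 0" using ep l1 unfolding h_def by auto
  define k where "k i = \<lfloor>(y i - y b) / h\<rfloor>" for i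
  have kb: "k b = 0" unfolding k_def by simp
  have "(y a - y b) / h \<ge> \<epsilon> / h" using dif hpos by (simp add: divide_right_mono)
  moreover have "\<epsilon> / h = l" unfolding h_def using ep l1 by auto
  ultimately have ka: "k a \<ge> int l" unfolding k_def by (simp add: le_floor_iff)
  have "\<not> {1..int l} \<subseteq> k ` C"
  proof
    assume H: "{1..int l} \<subseteq> k ` C"
    have "insert 0 {1..int l} \<subseteq> k ` C" using H kb bC by auto
    hence "card (insert 0 {1..int l}) \<le> card (k ` C)" using fin by (intro card_mono) auto
    also have "\<dots> \<le> l" unfolding l_def using fin by (rule card_image_le)
    finally show False by simp
  qed
  then obtain k0 where k0: "k0 \<in> {1..int l}" "k0 \<notin> k ` C" by blast
  define U where "U = {i\<in>C. k i > k0}"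
  define L where "L = {i\<in>C. k i < k0}"
  define \<theta> where "\<theta> = y b + k0 * h"
  have "U \<union> L = C"
  proof -
    have "\<And>i. i \<in> C \<Longrightarrow> k i \<noteq> k0" using k0 by auto
    thus ?thesis unfolding U_def L_def by force
  qed
  moreover have "U \<inter> L = {}" unfolding U_def L_def by auto
  moreover have "a \<in> U" unfolding U_def using aC ka k0 by (auto simp: image_iff)
  moreover have "b \<in> L" unfolding L_def using bC kb k0 by auto
  moreover have "\<forall>i\<in>L. y i < \<theta>"
  proof
    fix i assume "i \<in> L"
    hence "k i < k0" unfolding L_def by auto
    hence "(y i - y b) / h < k0" unfolding k_def by (simp add: floor_less_iff)
    hence "y i - y b < k0 * h" using hpos by (simp add: divide_less_eq)
    thus "y i < \<theta>" unfolding \<theta>_def by simp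
  qed
  moreover have "\<forall>i\<in>U. \<theta> + \<epsilon> / card C \<le> y i"
  proof
    fix i assume "i \<in> U"
    hence "k i \<ge> k0 + 1" unfolding U_def by auto
    hence "(y i - y b) / h \<ge> k0 + 1" unfolding k_def by (simp add: le_floor_iff)
    hence "y i - y b \<ge> (k0 + 1) * h" using hpos by (simp add: le_divide_eq)
    thus "\<theta> + \<epsilon> / card C \<le> y i" unfolding \<theta>_def h_def l_def by (simp add: algebra_simps add_divide_distrib)
  qed
  ultimately show ?thesis by blast
qed

locale vd =
  fixes m :: nat and x :: "nat \<Rightarrow> nat \<Rightarrow> real" and p q :: "nat \<Rightarrow> nat" and act :: "nat \<Rightarrow> bool"
  assumes pq: "\<And>t. p t \<in> {1..m} \<and> q t \<in> {1..m} \<and> p t \<noteq> q t"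
    and upd: "\<And>t i. i \<in> {1..m} \<Longrightarrow> x (Suc t) i =
        (if i \<in> {p t, q t} \<and> act t then (x t (p t) + x t (q t)) / 2 else x t i)"
begin

definition E :: "nat set set" where
  "E = {{a, b} | a b. a \<in> {1..m} \<and> b \<in> {1..m} \<and> a \<noteq> b \<and>
        infinite {t. {p t, q t} = {a, b} \<and> act t}}"

definition R :: "(nat \<times> nat) set" where "R = {(u, v). {u, v} \<in> E}"

lemma E_mem: assumes "{u, v} \<in> E"
  shows "u \<in> {1..m} \<and> v \<in> {1..m} \<and> infinite {t. {p t, q t} = {u, v} \<and> act t}"
proof -
  obtain a b where "{u, v} = {a, b}" "a \<in> {1..m}" "b \<in> {1..m}"
     "infinite {t. {p t, q t} = {a, b} \<and> act t}"
    using assms unfolding E_def by auto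
  thus ?thesis by (metis doubleton_eq_iff)
qed

lemma R_sym: "(u, v) \<in> R \<Longrightarrow> (v, u) \<in> R"
  unfolding R_def by (simp add: insert_commute)

lemma C_sub: "(a, i) \<in> R\<^sup>* \<Longrightarrow> a \<in> {1..m} \<Longrightarrow> i \<in> {1..m}"
proof (induction rule: rtrancl_induct)
  case base thus ?case by simp
next
  case (step y z) thus ?case using E_mem unfolding R_def by blast
qed

lemma finite_bad: "finite {t. act t \<and> {p t, q t} \<notin> E}"
proof -
  have fin: "finite {t. {p t, q t} = {u, v} \<and> act t \<and> {u, v} \<notin> E}"
    if "u \<in> {1..m}" "v \<in> {1..m}" for u v
  proof (cases "{u, v} \<in> E")
    case True thus ?thesis by simp
  next
    case False
    show ?thesis
    proof (rule ccontr)
      assume inf: "infinite {t. {p t, q t} = {u, v} \<and> act t \<and> {u, v} \<notin> E}"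
      then obtain t where "{p t, q t} = {u, v}" by (metis (mono_tags, lifting) empty_Collect_eq infinite_imp_nonempty)
      hence "u \<noteq> v" using pq[of t] by (auto simp: doubleton_eq_iff)
      hence "{u, v} \<in> E" using inf False that unfolding E_def by auto
      thus False using False by simp
    qed
  qed
  have "{t. act t \<and> {p t, q t} \<notin> E} \<subseteq>
        (\<Union>u\<in>{1..m}. \<Union>v\<in>{1..m}. {t. {p t, q t} = {u, v} \<and> act t \<and> {u, v} \<notin> E})"
    using pq by blast
  moreover have "finite (\<Union>u\<in>{1..m}. \<Union>v\<in>{1..m}. {t. {p t, q t} = {u, v} \<and> act t \<and> {u, v} \<notin> E})"
    using fin by auto
  ultimately show ?thesis by (rule finite_subset)
qed

lemma cross_edge:
  assumes "(a, y) \<in> R\<^sup>*" "a \<in> U" "y \<notin> U"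
  shows "\<exists>u v. (a, u) \<in> R\<^sup>* \<and> u \<in> U \<and> (u, v) \<in> R \<and> v \<notin> U"
  using assms
proof (induction rule: rtrancl_induct)
  case base thus ?case by simp
next
  case (step y z)
  show ?case
  proof (cases "y \<in> U")
    case True thus ?thesis using step by blast
  next
    case False thus ?thesis using step by blast
  qed
qed

definition V :: "nat \<Rightarrow> real" where "V t = (\<Sum>i\<in>{1..m}. (x t i)^2)"
definition g :: "nat \<Rightarrow> real" where
  "g t = (if act t then (x t (p t) - x t (q t))^2 else 0)"

lemma V_step: "V (Suc t) = V t - g t / 2"
proof (cases "act t")
  case False
  hence "V (Suc t) = V t" unfolding V_def using upd by (intro sum.cong) auto
  thus ?thesis using False unfolding g_def by simp
next
  case True
  define f where "f i = (x (Suc t) i)^2 - (x t i)^2" for i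
  have "V (Suc t) - V t = (\<Sum>i\<in>{1..m}. f i)" unfolding V_def f_def by (simp add: sum_subtractf)
  also have "\<dots> = (\<Sum>i\<in>{p t, q t}. f i)"
    using pq[of t] upd unfolding f_def by (intro sum.mono_neutral_cong_right) auto
  also have "\<dots> = f (p t) + f (q t)" using pq[of t] by simp
  also have "\<dots> = - g t / 2"
  proof -
    have e1: "x (Suc t) (p t) = (x t (p t) + x t (q t)) / 2" using True pq[of t] upd[of "p t" t] by simp
    have e2: "x (Suc t) (q t) = (x t (p t) + x t (q t)) / 2" using True pq[of t] upd[of "q t" t] by simp
    show ?thesis unfolding f_def g_def e1 e2 using True by (simp add: power2_eq_square field_simps)
  qed
  finally show ?thesis by simp
qed

lemma g_nonneg: "g t \<ge> 0" unfolding g_def by simp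

lemma V_nonneg: "V t \<ge> 0" unfolding V_def by (simp add: sum_nonneg)

lemma V_sum: "V t = V 0 - (\<Sum>s<t. g s) / 2"
  by (induction t) (simp_all add: V_step field_simps)

lemma g_lim: "g \<longlonglongrightarrow> 0"
proof -
  have "summable g"
  proof (rule summableI_nonneg_bounded[where x = "2 * V 0"])
    show "0 \<le> g n" for n by (rule g_nonneg)
    show "(\<Sum>i<n. g i) \<le> 2 * V 0" for n using V_sum[of n] V_nonneg[of n] by simp
  qed
  thus ?thesis by (rule summable_LIMSEQ_zero)
qed

lemma dyn:
  assumes T0: "\<forall>t\<ge>T0. act t \<longrightarrow> {p t, q t} \<in> E"
    and am: "a \<in> {1..m}" and Cd: "C = {i. (a, i) \<in> R\<^sup>*}" and t1: "t1 \<ge> T0"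
    and UL: "U \<union> L = C" "U \<inter> L = {}" and u0: "u0 \<in> U" and v0: "v0 \<in> L"
    and Lb: "\<forall>i\<in>L. x t1 i < \<theta>" and Ub: "\<forall>i\<in>U. \<theta> + h \<le> x t1 i"
  shows "\<exists>\<tau>\<ge>t1. act \<tau> \<and> h < \<bar>x \<tau> (p \<tau>) - x \<tau> (q \<tau>)\<bar>"
proof -
  have Cm: "i \<in> C \<Longrightarrow> i \<in> {1..m}" for i using C_sub[OF _ am] Cd by auto
  have aC: "a \<in> C" using Cd by simp
  have "\<exists>u v. u \<in> U \<and> v \<in> L \<and> (u, v) \<in> R"
  proof (cases "a \<in> U")
    case True
    have "(a, v0) \<in> R\<^sup>*" "v0 \<notin> U" using v0 UL Cd by auto
    then obtain u v where "(a, u) \<in> R\<^sup>*" "u \<in> U" "(u, v) \<in> R" "v \<notin> U"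
      using cross_edge True by blast
    moreover have "v \<in> C" using calculation Cd by (auto intro: rtrancl_into_rtrancl)
    ultimately show ?thesis using UL by blast
  next
    case False
    hence aL: "a \<in> L" using aC UL by auto
    have "(a, u0) \<in> R\<^sup>*" "u0 \<notin> L" using u0 UL Cd by auto
    then obtain u v where "(a, u) \<in> R\<^sup>*" "u \<in> L" "(u, v) \<in> R" "v \<notin> L"
      using cross_edge aL by blast
    moreover have "v \<in> C" using calculation Cd by (auto intro: rtrancl_into_rtrancl)
    ultimately show ?thesis using UL R_sym by blast
  qed
  then obtain u v where uv: "u \<in> U" "v \<in> L" "(u, v) \<in> R" by blast
  have "infinite {t. {p t, q t} = {u, v} \<and> act t}" using uv E_mem unfolding R_def by auto
  then obtain s where s: "s \<ge> t1" "{p s, q s} = {u, v}" "act s"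
    unfolding infinite_nat_iff_unbounded_le by blast
  define cross where "cross s \<longleftrightarrow> act s \<and> ((p s \<in> U \<and> q s \<in> L) \<or> (p s \<in> L \<and> q s \<in> U))" for s
  have cs: "cross s" using s uv unfolding cross_def by (auto simp: doubleton_eq_iff)
  define \<tau> where "\<tau> = (LEAST s. t1 \<le> s \<and> cross s)"
  have tau: "t1 \<le> \<tau>" "cross \<tau>" using LeastI[of "\<lambda>s. t1 \<le> s \<and> cross s", OF conjI[OF s(1) cs]]
    unfolding \<tau>_def by auto
  have nc: "\<not> cross s'" if "t1 \<le> s'" "s' < \<tau>" for s'
    using not_less_Least[of s' "\<lambda>s. t1 \<le> s \<and> cross s"] that unfolding \<tau>_def by auto
  have inv: "t1 + k \<le> \<tau> \<longrightarrow> (\<forall>i\<in>L. x (t1 + k) i < \<theta>) \<and> (\<forall>i\<in>U. \<theta> + h \<le> x (t1 + k) i)" for k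
  proof (induction k)
    case 0 thus ?case using Lb Ub by simp
  next
    case (Suc k)
    show ?case
    proof
      assume le: "t1 + Suc k \<le> \<tau>"
      define s' where "s' = t1 + k"
      have IH: "\<forall>i\<in>L. x s' i < \<theta>" "\<forall>i\<in>U. \<theta> + h \<le> x s' i" using Suc le unfolding s'_def by auto
      have ncs: "\<not> cross s'" using nc le unfolding s'_def by auto
      have both: "p s' \<in> C \<and> q s' \<in> C" if "i \<in> C" "i \<in> {p s', q s'}" "act s'" for i
      proof -
        have "{p s', q s'} \<in> E" using T0 t1 that(3) unfolding s'_def by auto
        hence "(p s', q s') \<in> R" "(q s', p s') \<in> R" unfolding R_def by (auto simp: insert_commute)
        thus ?thesis using that Cd by (auto intro: rtrancl_into_rtrancl)
      qed
      have "\<forall>i\<in>L. x (Suc s') i < \<theta>"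
      proof
        fix i assume iL: "i \<in> L"
        have iC: "i \<in> C" using iL UL by auto
        show "x (Suc s') i < \<theta>"
        proof (cases "i \<in> {p s', q s'} \<and> act s'")
          case True
          with both iC have "p s' \<in> C" "q s' \<in> C" by auto
          hence "p s' \<in> L \<and> q s' \<in> L" using ncs True iL UL unfolding cross_def by auto
          hence h1: "x s' (p s') < \<theta>" "x s' (q s') < \<theta>" using IH by auto
          have "x (Suc s') i = (x s' (p s') + x s' (q s')) / 2" using upd[OF Cm[OF iC], of s'] True by simp
          thus ?thesis using h1 by (simp add: field_simps)
        next
          case False thus ?thesis using upd[OF Cm[OF iC], of s'] IH iL by auto
        qed
      qed
      moreover have "\<forall>i\<in>U. \<theta> + h \<le> x (Suc s') i"
      proof
        fix i assume iU: "i \<in> U"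
        have iC: "i \<in> C" using iU UL by auto
        show "\<theta> + h \<le> x (Suc s') i"
        proof (cases "i \<in> {p s', q s'} \<and> act s'")
          case True
          with both iC have "p s' \<in> C" "q s' \<in> C" by auto
          hence "p s' \<in> U \<and> q s' \<in> U" using ncs True iU UL unfolding cross_def by auto
          hence h1: "\<theta> + h \<le> x s' (p s')" "\<theta> + h \<le> x s' (q s')" using IH by auto
          have "x (Suc s') i = (x s' (p s') + x s' (q s')) / 2" using upd[OF Cm[OF iC], of s'] True by simp
          thus ?thesis using h1 by (simp add: field_simps)
        next
          case False thus ?thesis using upd[OF Cm[OF iC], of s'] IH iU by auto
        qed
      qed
      ultimately show "(\<forall>i\<in>L. x (t1 + Suc k) i < \<theta>) \<and> (\<forall>i\<in>U. \<theta> + h \<le> x (t1 + Suc k) i)"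
        unfolding s'_def by simp
    qed
  qed
  have "(\<forall>i\<in>L. x \<tau> i < \<theta>) \<and> (\<forall>i\<in>U. \<theta> + h \<le> x \<tau> i)"
    using inv[of "\<tau> - t1"] tau by simp
  hence "h < \<bar>x \<tau> (p \<tau>) - x \<tau> (q \<tau>)\<bar>" using tau(2) unfolding cross_def by force
  thus ?thesis using tau cross_def by blast
qed

lemma conv:
  assumes am: "a \<in> {1..m}" and ab: "(a, b) \<in> R\<^sup>*"
  shows "(\<lambda>t. x t a - x t b) \<longlonglongrightarrow> 0"
proof -
  obtain T0 where T0': "\<forall>t\<in>{t. act t \<and> {p t, q t} \<notin> E}. t < T0"
    using finite_bad finite_nat_set_iff_bounded by blast
  have T0: "\<forall>t\<ge>T0. act t \<longrightarrow> {p t, q t} \<in> E" using T0' by force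
  define C where "C = {i. (a, i) \<in> R\<^sup>*}"
  have finC: "finite C" using C_sub[OF _ am] unfolding C_def
    by (metis (no_types, lifting) finite_atLeastAtMost finite_subset mem_Collect_eq subsetI)
  have aC: "a \<in> C" and bC: "b \<in> C" using ab unfolding C_def by auto
  show ?thesis
  proof (rule LIMSEQ_I)
    fix r :: real assume r: "r > 0"
    define c where "c = (r / card C)"
    have "card C > 0" using finC aC card_gt_0_iff by blast
    hence cpos: "c > 0" using r unfolding c_def by simp
    obtain N1 where N1: "\<forall>t\<ge>N1. norm (g t - 0) < c^2"
      using LIMSEQ_D[OF g_lim, of "c^2"] cpos by auto
    show "\<exists>N. \<forall>t\<ge>N. norm (x t a - x t b - 0) < r"
    proof (intro exI allI impI)
      fix t assume tN: "t \<ge> max T0 N1"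
      show "norm (x t a - x t b - 0) < r"
      proof (rule ccontr)
        assume "\<not> ?thesis"
        hence big: "\<bar>x t a - x t b\<bar> \<ge> r" by simp
        have "\<exists>U L \<theta>. U \<union> L = C \<and> U \<inter> L = {} \<and> (\<exists>u0. u0 \<in> U) \<and> (\<exists>v0. v0 \<in> L) \<and>
           (\<forall>i\<in>L. x t i < \<theta>) \<and> (\<forall>i\<in>U. \<theta> + c \<le> x t i)"
        proof (cases "x t a - x t b \<ge> r")
          case True
          from gap_lemma[OF finC aC bC r True] show ?thesis unfolding c_def by blast
        next
          case False
          hence "x t b - x t a \<ge> r" using big by auto
          from gap_lemma[OF finC bC aC r this] show ?thesis unfolding c_def by blast
        qed
        then obtain U L \<theta> u0 v0 where UL: "U \<union> L = C" "U \<inter> L = {}" "u0 \<in> U" "v0 \<in> L"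
          "\<forall>i\<in>L. x t i < \<theta>" "\<forall>i\<in>U. \<theta> + c \<le> x t i" by blast
        obtain \<tau> where tau: "\<tau> \<ge> t" "act \<tau>" "c < \<bar>x \<tau> (p \<tau>) - x \<tau> (q \<tau>)\<bar>"
          using dyn[OF T0 am C_def _ UL(1,2,3,4,5,6)] tN by auto
        have "c * c < \<bar>x \<tau> (p \<tau>) - x \<tau> (q \<tau>)\<bar> * \<bar>x \<tau> (p \<tau>) - x \<tau> (q \<tau>)\<bar>"
          using tau(3) cpos by (intro mult_strict_mono) auto
        hence "c^2 < (x \<tau> (p \<tau>) - x \<tau> (q \<tau>))^2"
          by (simp add: power2_eq_square)
        hence "c^2 < g \<tau>" using tau(2) unfolding g_def by simp
        moreover have "g \<tau> < c^2" using N1[rule_format, of \<tau>] tau(1) tN g_nonneg[of \<tau>] by auto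
        ultimately show False by simp
      qed
    qed
  qed
qed

end

theorem theorem3:
  fixes M :: "'w measure"
    and m n :: nat
    and X :: "'w \<Rightarrow> nat \<Rightarrow> nat \<Rightarrow> nat \<Rightarrow> real"
    and i1 i2 :: "'w \<Rightarrow> nat \<Rightarrow> nat"
    and S :: "'w \<Rightarrow> nat \<Rightarrow> nat set"
    and j a b :: nat
  assumes "prob_space M"
    and pair: "\<And>\<omega> t. \<omega> \<in> space M \<Longrightarrow>
        i1 \<omega> t \<in> {1..m} \<and> i2 \<omega> t \<in> {1..m} \<and> i1 \<omega> t \<noteq> i2 \<omega> t"
    and subj: "\<And>\<omega> t. \<omega> \<in> space M \<Longrightarrow> S \<omega> t \<subseteq> {1..n}"
    and update: "\<And>\<omega> t i k. \<omega> \<in> space M \<Longrightarrow> i \<in> {1..m} \<Longrightarrow> k \<in> {1..n} \<Longrightarrow>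
        X \<omega> (Suc t) i k =
          (if i \<in> {i1 \<omega> t, i2 \<omega> t} \<and> k \<in> S \<omega> t
           then (X \<omega> t (i1 \<omega> t) k + X \<omega> t (i2 \<omega> t) k) / 2
           else X \<omega> t i k)"
    and "j \<in> {1..n}" and "a \<in> {1..m}" and "b \<in> {1..m}"
  shows "{\<omega> \<in> space M. same_component (voting_edges m (i1 \<omega>) (i2 \<omega>) (S \<omega>) j) a b}
         \<subseteq> {\<omega> \<in> space M. (\<lambda>t. X \<omega> t a j - X \<omega> t b j) \<longlonglongrightarrow> 0}"
proof
  fix \<omega> assume w: "\<omega> \<in> {\<omega> \<in> space M. same_component (voting_edges m (i1 \<omega>) (i2 \<omega>) (S \<omega>) j) a b}"
  hence ws: "\<omega> \<in> space M" and sc: "same_component (voting_edges m (i1 \<omega>) (i2 \<omega>) (S \<omega>) j) a b" by auto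
  interpret v: vd m "\<lambda>t i. X \<omega> t i j" "i1 \<omega>" "i2 \<omega>" "\<lambda>t. j \<in> S \<omega> t"
    by unfold_locales (use pair[OF ws] update[OF ws _ \<open>j \<in> {1..n}\<close>] in auto)
  have "voting_edges m (i1 \<omega>) (i2 \<omega>) (S \<omega>) j = v.E"
    unfolding voting_edges_def v.E_def by simp
  hence "(a, b) \<in> v.R\<^sup>*" using sc unfolding same_component_def v.R_def by simp
  from v.conv[OF \<open>a \<in> {1..m}\<close> this] show "\<omega> \<in> {\<omega> \<in> space M. (\<lambda>t. X \<omega> t a j - X \<omega> t b j) \<longlonglongrightarrow> 0}"
    using ws by simp
qed

end
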